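(* Let $(\mathcal L,\mathcal M,\mathcal P)$ be a solution of the dispersionless $N$-modified KP hierarchy, with $v_m$ the coefficients of $\mathcal M$. Then $\mathcal P$ has the following expansion in powers of $\mathcal L$: \[ \mathcal P=\mathcal L^N\exp\Bigl(\sum_{m\ge1}\frac{-1}{m}\frac{\partial v_m}{\partial s}\mathcal L^{-m}\Bigr). \]
   Context: Fix a positive integer $N$. Let $x,s$ be variables and $t=(t_1,t_2,\dots)$. Consider formal Laurent series in $k$ with coefficients depending on $(x,t,s)$: $\mathcal L=k+\sum_{n\ge2}u_n(t;s)k^{1-n}$, $\mathcal M=\sum_{n\ge1}nt_n\mathcal L^{n-1}+x+Ns\mathcal L^{-1}+\sum_{i\ge1}v_i(t;s)\mathcal L^{-i-1}$, and the polynomial $\mathcal P=k^N+p_{N-1}k^{N-1}+\dots+p_0$. The Poisson bracket is $\{F,G\}=\frac{\partial F}{\partial k}\frac{\partial G}{\partial x}-\frac{\partial F}{\partial x}\frac{\partial G}{\partial k}$. For a Laurent series in $k$, $(\cdot)_{\ge0}$ is the polynomial part and $(\cdot)_{<0}$ the part with negative powers; $\mathcal B_n=(\mathcal L^n)_{\ge0}$. The dispersionless $N$-modified KP hierarchy is the system: $\partial\mathcal L/\partial t_n=\{\mathcal B_n,\mathcal L\}$, $\partial\mathcal M/\partial t_n=\{\mathcal B_n,\mathcal M\}$ ($n\ge1$), $\{\mathcal L,\mathcal M\}=1$, $(\partial\mathcal L/\partial s)\mathcal P=\{\mathcal P,\mathcal L\}$, $(\partial\mathcal M/\partial s)\mathcal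 P=\{\mathcal P,\mathcal M\}$, $-(\partial\mathcal B_n/\partial s)\mathcal P=-\partial\mathcal P/\partial t_n-\{\mathcal P,\mathcal B_n\}$ ($n\ge1$). *)

theory Defs
  imports "HOL-Analysis.Analysis" "HOL-Computational_Algebra.Formal_Laurent_Series"
begin

text \<open>A point is (x, t, s) with t :: nat => real; t n is the time t_n for n >= 1
(t 0 is an unused dummy).  The t-variables are restricted to finitely supported sequences, so
that the sum over n of n t_n L^(n-1) in M is a finite sum.
A formal Laurent series in k with finitely many positive and infinitely many negative powers of
k is represented as a real fls in the variable z = k^(-1); so k = fls_X_inv, k^j = fls_X_intpow (-j).\<close>

type_synonym pt = "real \<times> (nat \<Rightarrow> real) \<times> real"

definition ptdom :: "pt set" where
  "ptdom = {(x, t, s). finite {n. t n \<noteq> 0}}"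

datatype var = VX | VS | VT nat

fun setv :: "var \<Rightarrow> pt \<Rightarrow> real \<Rightarrow> pt" where
  "setv VX (x, t, s) y = (y, t, s)"
| "setv VS (x, t, s) y = (x, t, y)"
| "setv (VT n) (x, t, s) y = (x, t(n := y), s)"

fun getv :: "var \<Rightarrow> pt \<Rightarrow> real" where
  "getv VX (x, t, s) = x"
| "getv VS (x, t, s) = s"
| "getv (VT n) (x, t, s) = t n"

definition admissible :: "var \<Rightarrow> bool" where
  "admissible w \<longleftrightarrow> (\<forall>n. w = VT n \<longrightarrow> 1 \<le> n)"

definition pder :: "var \<Rightarrow> (pt \<Rightarrow> real) \<Rightarrow> pt \<Rightarrow> real" where
  "pder w f p = deriv (\<lambda>y. f (setv w p y)) (getv w p)"

definition pdiffble :: "var \<Rightarrow> (pt \<Rightarrow> real) \<Rightarrow> pt \<Rightarrow> bool" where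
  "pdiffble w f p \<longleftrightarrow> (\<lambda>y. f (setv w p y)) differentiable (at (getv w p))"

definition fpder :: "var \<Rightarrow> (pt \<Rightarrow> real fls) \<Rightarrow> pt \<Rightarrow> real fls" where
  "fpder w F p = Abs_fls (\<lambda>j. pder w (\<lambda>q. fls_nth (F q) j) p)"

text \<open>d/dk = - z^2 d/dz.\<close>
definition dk :: "real fls \<Rightarrow> real fls" where
  "dk A = - (fls_X ^ 2) * fls_deriv A"

definition pbr :: "(pt \<Rightarrow> real fls) \<Rightarrow> (pt \<Rightarrow> real fls) \<Rightarrow> pt \<Rightarrow> real fls" where
  "pbr F G p = dk (F p) * fpder VX G p - fpder VX F p * dk (G p)"

text \<open>Polynomial part in k (nonnegative powers of k = nonpositive powers of z).\<close>
definition kpos :: "real fls \<Rightarrow> real fls" where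
  "kpos A = A - fps_to_fls (fls_regpart A) + fls_const (fls_nth A 0)"

text \<open>L = k + sum_{n>=2} u_n k^(1-n).\<close>
definition Lser :: "(nat \<Rightarrow> pt \<Rightarrow> real) \<Rightarrow> pt \<Rightarrow> real fls" where
  "Lser u p = fls_X_inv + fps_to_fls (Abs_fps (\<lambda>j. if j = 0 then 0 else u (j + 1) p))"

definition Pser :: "nat \<Rightarrow> (nat \<Rightarrow> pt \<Rightarrow> real) \<Rightarrow> pt \<Rightarrow> real fls" where
  "Pser N pc p = fls_X_intpow (- int N) + (\<Sum>j<N. fls_const (pc j p) * fls_X_intpow (- int j))"

text \<open>L^(-1) as a power series in z (it has z-valuation 1).\<close>
definition Wser :: "real fls \<Rightarrow> real fps" where
  "Wser L = fls_regpart (inverse L)"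

text \<open>sum_{i>=1} c_i L^(-i-1) = L^(-1) * sum_{i>=1} c_i (L^(-1))^i.\<close>
definition negsum :: "(nat \<Rightarrow> real) \<Rightarrow> real fls \<Rightarrow> real fls" where
  "negsum c L = inverse L * fps_to_fls (Abs_fps (\<lambda>i. if i = 0 then 0 else c i) oo Wser L)"

text \<open>M = sum_{n>=1} n t_n L^(n-1) + x + N s L^(-1) + sum_{i>=1} v_i L^(-i-1).\<close>
definition Mser :: "nat \<Rightarrow> (nat \<Rightarrow> pt \<Rightarrow> real) \<Rightarrow> (nat \<Rightarrow> pt \<Rightarrow> real) \<Rightarrow> pt \<Rightarrow> real fls" where
  "Mser N u v p = (case p of (x, t, s) \<Rightarrow>
      (\<Sum>n\<in>{n. 1 \<le> n \<and> t n \<noteq> 0}. fls_const (of_nat n * t n) * (Lser u p) ^ (n - 1))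
      + fls_const x + fls_const (of_nat N * s) * inverse (Lser u p)
      + negsum (\<lambda>i. v i p) (Lser u p))"

definition Bser :: "(nat \<Rightarrow> pt \<Rightarrow> real) \<Rightarrow> nat \<Rightarrow> pt \<Rightarrow> real fls" where
  "Bser u n p = kpos ((Lser u p) ^ n)"

end

theory Submission
  imports Defs
begin

unbundle fps_syntax


definition cdiff :: "(real \<Rightarrow> real fls) \<Rightarrow> real fls \<Rightarrow> real \<Rightarrow> bool" where
  "cdiff A D y0 \<longleftrightarrow> (\<forall>j. ((\<lambda>y. A y $$ j) has_field_derivative D $$ j) (at y0))"

definition lbd :: "int \<Rightarrow> (real \<Rightarrow> real fls) \<Rightarrow> bool" where
  "lbd K A \<longleftrightarrow> (\<forall>y j. j < K \<longrightarrow> A y $$ j = 0)"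

lemma cdiff_unique: "cdiff A D1 y0 \<Longrightarrow> cdiff A D2 y0 \<Longrightarrow> D1 = D2"
  unfolding cdiff_def by (intro fls_eqI) (meson DERIV_unique)

lemma cdiff_cong: "cdiff A D y0 \<Longrightarrow> (\<And>y. A y = B y) \<Longrightarrow> cdiff B D y0"
  unfolding cdiff_def by simp

lemma lbd_deriv: assumes "lbd K A" "cdiff A D y0" "j < K" shows "D $$ j = 0"
proof -
  have "((\<lambda>y. A y $$ j) has_field_derivative D $$ j) (at y0)" using assms(2) cdiff_def by blast
  moreover have "(\<lambda>y. A y $$ j) = (\<lambda>y. 0)" using assms(1,3) lbd_def by auto
  ultimately show ?thesis using DERIV_const DERIV_unique by metis
qed

lemma cdiff_const: "cdiff (\<lambda>y. c) 0 y0"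
  unfolding cdiff_def by simp

lemma cdiff_add: "cdiff A DA y0 \<Longrightarrow> cdiff B DB y0 \<Longrightarrow> cdiff (\<lambda>y. A y + B y) (DA + DB) y0"
  unfolding cdiff_def by (auto intro: derivative_intros)

lemma cdiff_diff: "cdiff A DA y0 \<Longrightarrow> cdiff B DB y0 \<Longrightarrow> cdiff (\<lambda>y. A y - B y) (DA - DB) y0"
  unfolding cdiff_def by (auto intro: derivative_intros)

lemma cdiff_uminus: "cdiff A DA y0 \<Longrightarrow> cdiff (\<lambda>y. - A y) (- DA) y0"
  unfolding cdiff_def by (auto intro: derivative_intros)

lemma cdiff_fls_const: "(f has_field_derivative f') (at y0) \<Longrightarrow> cdiff (\<lambda>y. fls_const (f y)) (fls_const f') y0"
  unfolding cdiff_def by (auto intro: derivative_intros)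

lemma cdiff_sum: "finite S \<Longrightarrow> (\<And>i. i \<in> S \<Longrightarrow> cdiff (A i) (D i) y0) \<Longrightarrow>
   cdiff (\<lambda>y. \<Sum>i\<in>S. A i y) (\<Sum>i\<in>S. D i) y0"
  unfolding cdiff_def fls_nth_sum by (auto intro!: DERIV_sum)

lemma lbd_add: "lbd K A \<Longrightarrow> lbd K B \<Longrightarrow> lbd K (\<lambda>y. A y + B y)"
  unfolding lbd_def by simp
lemma lbd_mono: "lbd K A \<Longrightarrow> K' \<le> K \<Longrightarrow> lbd K' A"
  unfolding lbd_def by simp
lemma lbd_sum: "(\<And>i. i \<in> S \<Longrightarrow> lbd K (A i)) \<Longrightarrow> lbd K (\<lambda>y. \<Sum>i\<in>S. A i y)"
  unfolding lbd_def fls_nth_sum by (simp add: sum.neutral)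
lemma lbd_const: "lbd 0 (\<lambda>y. fls_const (f y))"
  unfolding lbd_def by simp

lemma times_nth_bound:
  fixes a b :: "real fls"
  assumes a: "\<And>i. i < K1 \<Longrightarrow> a $$ i = 0" and b: "\<And>i. i < K2 \<Longrightarrow> b $$ i = 0"
  shows "(a * b) $$ n = (\<Sum>i=K1..n-K2. a $$ i * b $$ (n - i))"
proof (cases "a = 0 \<or> b = 0")
  case True then show ?thesis by auto
next
  case False
  then have an: "a \<noteq> 0" and bn: "b \<noteq> 0" by auto
  have K1: "K1 \<le> fls_subdegree a" using a an nth_fls_subdegree_nonzero by (metis not_less)
  have K2: "K2 \<le> fls_subdegree b" using b bn nth_fls_subdegree_nonzero by (metis not_less)
  have "(a * b) $$ n = (\<Sum>i=fls_subdegree a..n - fls_subdegree b. a $$ i * b $$ (n - i))"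
    by (rule fls_times_nth(2))
  also have "\<dots> = (\<Sum>i=K1..n-K2. a $$ i * b $$ (n - i))"
  proof (rule sum.mono_neutral_left)
    show "{fls_subdegree a..n - fls_subdegree b} \<subseteq> {K1..n - K2}" using K1 K2 by auto
    show "\<forall>i\<in>{K1..n - K2} - {fls_subdegree a..n - fls_subdegree b}. a $$ i * b $$ (n - i) = 0"
      by (auto simp: fls_eq0_below_subdegree)
  qed simp
  finally show ?thesis .
qed

lemma lbd_mult: "lbd K1 A \<Longrightarrow> lbd K2 B \<Longrightarrow> lbd (K1+K2) (\<lambda>y. A y * B y)"
  unfolding lbd_def by (auto simp: times_nth_bound[of K1 _ K2])

lemma cdiff_mult:
  assumes la: "lbd K1 A" and lb: "lbd K2 B" and da: "cdiff A DA y0" and db: "cdiff B DB y0"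
  shows "cdiff (\<lambda>y. A y * B y) (DA * B y0 + A y0 * DB) y0"
  unfolding cdiff_def
proof
  fix n
  have e: "\<And>y. (A y * B y) $$ n = (\<Sum>i=K1..n-K2. A y $$ i * B y $$ (n - i))"
    using la lb unfolding lbd_def by (intro times_nth_bound) auto
  have dA0: "\<And>i. i < K1 \<Longrightarrow> DA $$ i = 0" using lbd_deriv[OF la da] .
  have dB0: "\<And>i. i < K2 \<Longrightarrow> DB $$ i = 0" using lbd_deriv[OF lb db] .
  have v: "(DA * B y0 + A y0 * DB) $$ n = (\<Sum>i=K1..n-K2. DA $$ i * B y0 $$ (n - i) + A y0 $$ i * DB $$ (n - i))"
    using la lb dA0 dB0 unfolding lbd_def
    by (simp add: times_nth_bound[of K1 _ K2] sum.distrib)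
  have "((\<lambda>y. \<Sum>i=K1..n-K2. A y $$ i * B y $$ (n - i)) has_field_derivative
        (\<Sum>i=K1..n-K2. DA $$ i * B y0 $$ (n - i) + A y0 $$ i * DB $$ (n - i))) (at y0)"
    using da db unfolding cdiff_def
    by (intro DERIV_sum) (auto intro!: derivative_eq_intros)
  then show "((\<lambda>y. (A y * B y) $$ n) has_field_derivative (DA * B y0 + A y0 * DB) $$ n) (at y0)"
    unfolding e v .
qed

lemma lbd_one: "lbd 0 (\<lambda>y. 1)"
  unfolding lbd_def by simp

lemma lbd_power: "lbd K A \<Longrightarrow> lbd (int m * K) (\<lambda>y. A y ^ m)"
proof (induction m)
  case 0 then show ?case using lbd_one by simp
next
  case (Suc m)
  have "lbd (K + int m * K) (\<lambda>y. A y * A y ^ m)" by (rule lbd_mult[OF Suc.prems Suc.IH[OF Suc.prems]])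
  then show ?case by (simp add: algebra_simps)
qed

lemma cdiff_power:
  assumes la: "lbd K A" and da: "cdiff A D y0"
  shows "cdiff (\<lambda>y. A y ^ m) (of_nat m * A y0 ^ (m - 1) * D) y0"
proof (induction m)
  case 0 then show ?case using cdiff_const[of 1 y0] by simp
next
  case (Suc m)
  have "cdiff (\<lambda>y. A y * A y ^ m) (D * A y0 ^ m + A y0 * (of_nat m * A y0 ^ (m - 1) * D)) y0"
    by (rule cdiff_mult[OF la lbd_power[OF la] da Suc.IH])
  moreover have "D * A y0 ^ m + A y0 * (of_nat m * A y0 ^ (m - 1) * D) = of_nat (Suc m) * A y0 ^ (Suc m - 1) * D"
    by (cases m) (auto simp: algebra_simps)
  ultimately show ?case by simp
qed

lemma cdiff_deriv:
  assumes "lbd K A" "\<And>j. (\<lambda>y. A y $$ j) differentiable (at y0)"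
  shows "cdiff A (Abs_fls (\<lambda>j. deriv (\<lambda>y. A y $$ j) y0)) y0"
proof -
  have z: "\<And>j. j < K \<Longrightarrow> deriv (\<lambda>y. A y $$ j) y0 = 0"
    using assms(1) unfolding lbd_def by simp
  have "Abs_fls (\<lambda>j. deriv (\<lambda>y. A y $$ j) y0) $$ j = deriv (\<lambda>y. A y $$ j) y0" for j
    by (rule nth_Abs_fls_lower_bound[of K]) (use z in auto)
  then show ?thesis unfolding cdiff_def using assms(2) DERIV_deriv_iff_real_differentiable by simp
qed

lemma fpder_VS_cdiff:
  assumes "cdiff (\<lambda>y. F (x, t, y)) D s"
  shows "fpder VS F (x, t, s) = D"
proof -
  have "\<And>j. pder VS (\<lambda>q. F q $$ j) (x, t, s) = D $$ j"
    using assms unfolding cdiff_def pder_def by (simp add: DERIV_imp_deriv)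
  then show ?thesis unfolding fpder_def by (simp add: fls_nth_inverse)
qed


lemma comp_trunc:
  fixes f g :: "real fps"
  assumes g0: "g $ 0 = 0" and iK: "i \<le> K"
  shows "(f oo g) $ i = (\<Sum>j\<le>K. f $ j * (g ^ j) $ i)"
proof -
  have "(f oo g) $ i = (\<Sum>j\<in>{0..i}. f $ j * (g ^ j) $ i)" by (rule fps_compose_nth)
  also have "\<dots> = (\<Sum>j\<le>K. f $ j * (g ^ j) $ i)"
  proof (rule sum.mono_neutral_left)
    show "{0..i} \<subseteq> {..K}" using iK by auto
    show "\<forall>j\<in>{..K} - {0..i}. f $ j * (g ^ j) $ i = 0"
      using startsby_zero_power_prefix[OF g0] by auto
  qed simp
  finally show ?thesis .
qed

lemma comp_trunc_fls:
  fixes f g :: "real fps"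
  assumes g0: "g $ 0 = 0" and iK: "n \<le> int K"
  shows "fps_to_fls (f oo g) $$ n = (\<Sum>j\<le>K. fls_const (f $ j) * fps_to_fls g ^ j) $$ n"
proof (cases "n < 0")
  case True then show ?thesis by (simp add: fls_nth_sum flip: fps_to_fls_power)
next
  case False
  then show ?thesis using comp_trunc[OF g0, of "nat n" K f] iK
    by (simp add: fls_nth_sum flip: fps_to_fls_power)
qed

lemma lbd_fps: "lbd 0 (\<lambda>y. fps_to_fls (g y))"
  unfolding lbd_def by simp

lemma lbd_fps1: "(\<And>y. g y $ 0 = 0) \<Longrightarrow> lbd 1 (\<lambda>y. fps_to_fls (g y))"
  unfolding lbd_def by (auto simp: not_less)

lemma cdiff_comp:
  fixes c g :: "real \<Rightarrow> real fps"
  assumes g0: "\<And>y. g y $ 0 = 0"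
    and dc: "\<And>i. ((\<lambda>y. c y $ i) has_field_derivative c' $ i) (at y0)"
    and dW: "cdiff (\<lambda>y. fps_to_fls (g y)) DW y0"
  shows "cdiff (\<lambda>y. fps_to_fls (c y oo g y))
     (fps_to_fls (c' oo g y0) + fps_to_fls (fps_deriv (c y0) oo g y0) * DW) y0"
  unfolding cdiff_def
proof
  fix n :: int
  define W where "W = (\<lambda>y. fps_to_fls (g y))"
  have lW: "lbd 1 W" unfolding W_def by (rule lbd_fps1[OF g0])
  have lW0: "lbd 0 W" using lbd_mono[OF lW] by simp
  have DW1: "\<And>i. i < 1 \<Longrightarrow> DW $$ i = 0" using lbd_deriv[OF lW dW[folded W_def]] .
  show "((\<lambda>y. fps_to_fls (c y oo g y) $$ n) has_field_derivative
        (fps_to_fls (c' oo g y0) + fps_to_fls (fps_deriv (c y0) oo g y0) * DW) $$ n) (at y0)"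
  proof (cases "n < 0")
    case True
    have "(fps_to_fls (fps_deriv (c y0) oo g y0) * DW) $$ n = 0"
      using True DW1 by (simp add: times_nth_bound[of 0 _ 1])
    then show ?thesis using True by simp
  next
    case False
    define m where "m = nat n"
    have nm: "n = int m" using False m_def by simp
    define T where "T = (\<lambda>y. \<Sum>j\<le>m. fls_const (c y $ j) * W y ^ j)"
    define DT where "DT = (\<Sum>j\<le>m. fls_const (c' $ j) * W y0 ^ j
        + fls_const (c y0 $ j) * (of_nat j * W y0 ^ (j - 1) * DW))"
    have cT: "cdiff T DT y0"
      unfolding T_def DT_def
    proof (rule cdiff_sum)
      fix j assume "j \<in> {..m}"
      have "cdiff (\<lambda>y. fls_const (c y $ j) * W y ^ j)
         (fls_const (c' $ j) * W y0 ^ j + fls_const (c y0 $ j) * (of_nat j * W y0 ^ (j - 1) * DW)) y0"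
        by (rule cdiff_mult[OF lbd_const lbd_power[OF lW0] cdiff_fls_const[OF dc] cdiff_power[OF lW0 dW[folded W_def]]])
      then show "cdiff (\<lambda>y. fls_const (c y $ j) * W y ^ j)
         (fls_const (c' $ j) * W y0 ^ j + fls_const (c y0 $ j) * (of_nat j * W y0 ^ (j - 1) * DW)) y0" .
    qed simp
    have eq: "(\<lambda>y. fps_to_fls (c y oo g y) $$ n) = (\<lambda>y. T y $$ n)"
      unfolding T_def W_def by (rule ext, rule comp_trunc_fls[OF g0]) (use nm in simp)
    have d1: "((\<lambda>y. T y $$ n) has_field_derivative DT $$ n) (at y0)"
      using cT unfolding cdiff_def by blast
    have p1: "(\<Sum>j\<le>m. fls_const (c' $ j) * W y0 ^ j) $$ n = fps_to_fls (c' oo g y0) $$ n"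
      unfolding W_def using comp_trunc_fls[OF g0, of n m c'] nm by simp
    define A1 where "A1 = (\<Sum>j\<le>m. fls_const (c y0 $ j * of_nat j) * W y0 ^ (j - 1))"
    define A2 where "A2 = fps_to_fls (fps_deriv (c y0) oo g y0)"
    have s2: "(\<Sum>j\<le>m. fls_const (c y0 $ j) * (of_nat j * W y0 ^ (j - 1) * DW)) = A1 * DW"
      unfolding A1_def by (simp add: sum_distrib_right mult.assoc fls_of_nat fls_const_mult_const[symmetric] del: fls_const_mult_const)
    have A12: "A1 $$ i = A2 $$ i" if ii: "0 \<le> i" "i \<le> n - 1" for i
    proof -
      obtain m' where mm: "m = Suc m'" using ii nm by (cases m) auto
      have im: "nat i \<le> m'" using that nm mm by simp
      have "A2 $$ i = (\<Sum>j\<le>m'. fps_deriv (c y0) $ j * (g y0 ^ j) $ nat i)"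
        unfolding A2_def using that comp_trunc[OF g0 im] by simp
      also have "\<dots> = (\<Sum>j\<le>m'. c y0 $ Suc j * of_nat (Suc j) * (g y0 ^ j) $ nat i)"
        by (simp add: fps_deriv_nth mult.commute)
      also have "\<dots> = (\<Sum>j\<le>m. c y0 $ j * of_nat j * (g y0 ^ (j - 1)) $ nat i)"
        unfolding mm sum.atMost_Suc_shift by simp
      also have "\<dots> = A1 $$ i"
        unfolding A1_def W_def using that by (simp add: fls_nth_sum flip: fps_to_fls_power)
      finally show ?thesis by simp
    qed
    have lA1: "\<And>i. i < 0 \<Longrightarrow> A1 $$ i = 0" unfolding A1_def W_def
      by (simp add: fls_nth_sum flip: fps_to_fls_power)
    have lA2: "\<And>i. i < 0 \<Longrightarrow> A2 $$ i = 0" unfolding A2_def by simp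
    have p2: "(A1 * DW) $$ n = (A2 * DW) $$ n"
      using A12 lA1 lA2 DW1 by (simp add: times_nth_bound[of 0 _ 1])
    have "DT $$ n = (fps_to_fls (c' oo g y0) + fps_to_fls (fps_deriv (c y0) oo g y0) * DW) $$ n"
      unfolding DT_def sum.distrib fls_plus_nth s2 p1 p2[unfolded A2_def] by simp
    then show ?thesis using d1 eq by simp
  qed
qed


definition Lf :: "(nat \<Rightarrow> pt \<Rightarrow> real) \<Rightarrow> pt \<Rightarrow> real fps" where
  "Lf u q = Abs_fps (\<lambda>k. if k = 0 then 1 else if k = 1 then 0 else u k q)"

definition gW :: "(nat \<Rightarrow> pt \<Rightarrow> real) \<Rightarrow> pt \<Rightarrow> real fps" where
  "gW u q = fps_X * inverse (Lf u q)"

lemma Lser_nth: "Lser u q $$ j = (if j = -1 then 1 else if j \<ge> 1 then u (nat j + 1) q else 0)"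
  unfolding Lser_def by (auto simp: nat_eq_iff)

lemma Lser_form: "Lser u q = fls_X_inv * fps_to_fls (Lf u q)"
proof (rule fls_eqI)
  fix n :: int
  show "Lser u q $$ n = (fls_X_inv * fps_to_fls (Lf u q)) $$ n"
    unfolding Lser_nth fls_X_inv_times_conv_shift fls_shift_nth Lf_def
    by (auto simp: nat_add_distrib nat_eq_iff)
qed

lemma Lf0: "Lf u q $ 0 = 1" unfolding Lf_def by simp

lemma Lser_nz: "Lser u q \<noteq> 0"
  using Lser_nth[of u q "-1"] by auto

lemma inv_Lser: "inverse (Lser u q) = fps_to_fls (gW u q)"
proof -
  have sd: "subdegree (Lf u q) = 0" using Lf0 by (simp add: subdegree_eq_0_iff)
  have "inverse (Lser u q) = inverse fls_X_inv * inverse (fps_to_fls (Lf u q))"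
    unfolding Lser_form by (simp add: inverse_mult_distrib)
  also have "\<dots> = fls_X * fps_to_fls (inverse (Lf u q))"
    by (simp add: fls_inverse_X_inv fls_inverse_fps_to_fls[OF sd])
  also have "\<dots> = fps_to_fls (gW u q)" unfolding gW_def by (simp add: fls_times_fps_to_fls)
  finally show ?thesis .
qed

lemma Wser_Lser: "Wser (Lser u q) = gW u q"
  unfolding Wser_def inv_Lser by simp

lemma gW0: "gW u q $ 0 = 0" unfolding gW_def by simp

lemma LW1: "Lser u q * fps_to_fls (gW u q) = 1"
  using Lser_nz by (simp flip: inv_Lser)


lemma Lf_diff:
  assumes du: "\<And>n. 2 \<le> n \<Longrightarrow> (\<lambda>y. u n (x, t, y)) differentiable (at s)"
  shows "(\<lambda>y. Lf u (x, t, y) $ i) differentiable (at s)"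
  unfolding Lf_def using du[of i] by (cases "i = 0 \<or> i = 1") auto

lemma invLf_diff:
  assumes du: "\<And>n. 2 \<le> n \<Longrightarrow> (\<lambda>y. u n (x, t, y)) differentiable (at s)"
  shows "(\<lambda>y. inverse (Lf u (x, t, y)) $ n) differentiable (at s)"
proof -
  have e: "inverse (Lf u q) $ n = fps_right_inverse_constructor (Lf u q) 1 n" for q n
    unfolding fps_inverse_def by (simp add: Lf0)
  have "(\<lambda>y. fps_right_inverse_constructor (Lf u (x, t, y)) 1 n) differentiable (at s)"
  proof (induction n rule: less_induct)
    case (less n)
    show ?case
    proof (cases n)
      case 0 then show ?thesis by simp
    next
      case (Suc k)
      have "(\<lambda>y. - 1 * (\<Sum>i\<in>{1..n}. Lf u (x, t, y) $ i * fps_right_inverse_constructor (Lf u (x, t, y)) 1 (n - i)))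
             differentiable (at s)"
        using less Lf_diff[OF du] Suc
        by (intro differentiable_mult differentiable_sum differentiable_const) auto
      then show ?thesis using Suc by simp
    qed
  qed
  then show ?thesis unfolding e .
qed

lemma W_diff:
  assumes du: "\<And>n. 2 \<le> n \<Longrightarrow> (\<lambda>y. u n (x, t, y)) differentiable (at s)"
  shows "(\<lambda>y. fps_to_fls (gW u (x, t, y)) $$ j) differentiable (at s)"
proof -
  have d: "(\<lambda>y. inverse (Lf u (x, t, y)) $ (nat j - 1)) differentiable (at s)"
    by (rule invLf_diff[OF du])
  show ?thesis
  proof (cases "j < 0 \<or> nat j = 0")
    case True
    then have "(\<lambda>y. fps_to_fls (gW u (x, t, y)) $$ j) = (\<lambda>y. 0)"
      unfolding gW_def by (auto simp: fps_X_mult_nth)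
    then show ?thesis by simp
  next
    case False then show ?thesis unfolding gW_def using d by (simp add: fps_X_mult_nth)
  qed
qed

lemma L_diff:
  assumes du: "\<And>n. 2 \<le> n \<Longrightarrow> (\<lambda>y. u n (x, t, y)) differentiable (at s)"
  shows "(\<lambda>y. Lser u (x, t, y) $$ j) differentiable (at s)"
proof -
  consider "j = -1" | "1 \<le> j" | "j \<noteq> -1 \<and> \<not> 1 \<le> j" by auto
  then show ?thesis
  proof cases
    case 2 then show ?thesis unfolding Lser_nth using du[of "nat j + 1"] by simp
  qed (auto simp: Lser_nth)
qed

lemma lbd_L: "lbd (-1) (\<lambda>y. Lser u (x, t, y))"
  unfolding lbd_def Lser_nth by auto

lemma cdiff_L:
  assumes du: "\<And>n. 2 \<le> n \<Longrightarrow> (\<lambda>y. u n (x, t, y)) differentiable (at s)"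
  shows "cdiff (\<lambda>y. Lser u (x, t, y)) (fpder VS (Lser u) (x, t, s)) s"
proof -
  have c: "cdiff (\<lambda>y. Lser u (x, t, y)) (Abs_fls (\<lambda>j. deriv (\<lambda>y. Lser u (x, t, y) $$ j) s)) s"
    by (rule cdiff_deriv[OF lbd_L L_diff[OF du]])
  then show ?thesis using fpder_VS_cdiff[OF c] by simp
qed

lemma cdiff_W:
  assumes du: "\<And>n. 2 \<le> n \<Longrightarrow> (\<lambda>y. u n (x, t, y)) differentiable (at s)"
  shows "cdiff (\<lambda>y. fps_to_fls (gW u (x, t, y)))
     (- (fps_to_fls (gW u (x, t, s)))\<^sup>2 * fpder VS (Lser u) (x, t, s)) s"
proof -
  define W where "W = (\<lambda>y. fps_to_fls (gW u (x, t, y)))"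
  define L where "L = (\<lambda>y. Lser u (x, t, y))"
  define Ls where "Ls = fpder VS (Lser u) (x, t, s)"
  define D where "D = Abs_fls (\<lambda>j. deriv (\<lambda>y. W y $$ j) s)"
  have cW: "cdiff W D s" unfolding D_def W_def
    by (rule cdiff_deriv[OF lbd_fps W_diff[OF du]])
  have cL: "cdiff L Ls s" unfolding L_def Ls_def by (rule cdiff_L[OF du])
  have "cdiff (\<lambda>y. L y * W y) (Ls * W s + L s * D) s"
    by (rule cdiff_mult[OF lbd_L[of u x t, folded L_def] lbd_fps[of "\<lambda>y. gW u (x, t, y)", folded W_def] cL cW])
  moreover have "cdiff (\<lambda>y. L y * W y) 0 s"
    using cdiff_const[of 1 s] unfolding L_def W_def LW1 .
  ultimately have z: "Ls * W s + L s * D = 0" using cdiff_unique by blast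
  have lw: "W s * L s = 1" unfolding W_def L_def using LW1 by (simp add: mult.commute)
  have "D = W s * L s * D" using lw by simp
  also have "\<dots> = W s * (Ls * W s + L s * D) - W s ^ 2 * Ls" by (simp add: algebra_simps power2_eq_square)
  also have "\<dots> = - (W s)\<^sup>2 * Ls" using z by simp
  finally have "D = - (W s)\<^sup>2 * Ls" .
  then show ?thesis using cW unfolding W_def Ls_def by simp
qed


definition cvf :: "(nat \<Rightarrow> pt \<Rightarrow> real) \<Rightarrow> pt \<Rightarrow> real fps" where
  "cvf v q = Abs_fps (\<lambda>i. if i = 0 then 0 else v i q)"

definition cvs :: "(nat \<Rightarrow> pt \<Rightarrow> real) \<Rightarrow> pt \<Rightarrow> real fps" where
  "cvs v q = Abs_fps (\<lambda>i. if i = 0 then 0 else pder VS (v i) q)"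

lemma M_form:
  "Mser N u v (x, t, y) =
    (\<Sum>n\<in>{n. 1 \<le> n \<and> t n \<noteq> 0}. fls_const (of_nat n * t n) * Lser u (x, t, y) ^ (n - 1))
    + fls_const x + fls_const (of_nat N * y) * fps_to_fls (gW u (x, t, y))
    + fps_to_fls (gW u (x, t, y)) * fps_to_fls (cvf v (x, t, y) oo gW u (x, t, y))"
  unfolding Mser_def negsum_def inv_Lser Wser_Lser cvf_def by simp

lemma cv_deriv:
  assumes dv: "\<And>n. 1 \<le> n \<Longrightarrow> (\<lambda>y. v n (x, t, y)) differentiable (at s)"
  shows "((\<lambda>y. cvf v (x, t, y) $ i) has_field_derivative cvs v (x, t, s) $ i) (at s)"
proof (cases "i = 0")
  case True then show ?thesis unfolding cvf_def cvs_def by simp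
next
  case False
  then have "((\<lambda>y. v i (x, t, y)) has_field_derivative deriv (\<lambda>y. v i (x, t, y)) s) (at s)"
    using dv[of i] DERIV_deriv_iff_real_differentiable by simp
  then show ?thesis using False unfolding cvf_def cvs_def pder_def by simp
qed

lemma cdiff_M:
  assumes du: "\<And>n. 2 \<le> n \<Longrightarrow> (\<lambda>y. u n (x, t, y)) differentiable (at s)"
    and dv: "\<And>n. 1 \<le> n \<Longrightarrow> (\<lambda>y. v n (x, t, y)) differentiable (at s)"
    and fin: "finite {n. t n \<noteq> 0}"
  defines "L \<equiv> Lser u (x, t, s)" and "Ls \<equiv> fpder VS (Lser u) (x, t, s)"
    and "g \<equiv> gW u (x, t, s)" and "W \<equiv> fps_to_fls (gW u (x, t, s))"
  shows "cdiff (\<lambda>y. Mser N u v (x, t, y))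
    ((\<Sum>n\<in>{n. 1 \<le> n \<and> t n \<noteq> 0}. 0 * L ^ (n - 1) + fls_const (of_nat n * t n) * (of_nat (n - 1) * L ^ (n - 1 - 1) * Ls))
     + 0 + (fls_const (of_nat N) * W + fls_const (of_nat N * s) * (- W\<^sup>2 * Ls))
     + ((- W\<^sup>2 * Ls) * fps_to_fls (cvf v (x, t, s) oo g)
        + W * (fps_to_fls (cvs v (x, t, s) oo g) + fps_to_fls (fps_deriv (cvf v (x, t, s)) oo g) * (- W\<^sup>2 * Ls)))) s"
proof -
  have finS: "finite {n. 1 \<le> n \<and> t n \<noteq> 0}" using fin by (rule rev_finite_subset) auto
  have cL: "cdiff (\<lambda>y. Lser u (x, t, y)) Ls s" unfolding Ls_def by (rule cdiff_L[OF du])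
  have cW: "cdiff (\<lambda>y. fps_to_fls (gW u (x, t, y))) (- W\<^sup>2 * Ls) s"
    unfolding W_def Ls_def by (rule cdiff_W[OF du])
  have cN: "cdiff (\<lambda>y. fls_const (of_nat N * y)) (fls_const (of_nat N)) s"
    by (rule cdiff_fls_const) (auto intro!: derivative_eq_intros)
  have cR: "cdiff (\<lambda>y. fps_to_fls (cvf v (x, t, y) oo gW u (x, t, y)))
     (fps_to_fls (cvs v (x, t, s) oo g) + fps_to_fls (fps_deriv (cvf v (x, t, s)) oo g) * (- W\<^sup>2 * Ls)) s"
    unfolding g_def by (rule cdiff_comp[OF gW0 cv_deriv[OF dv] cW])
  show ?thesis
    unfolding M_form L_def
    apply (intro cdiff_add cdiff_sum finS cdiff_const cdiff_mult[OF lbd_const lbd_power[OF lbd_L] cdiff_const cdiff_power[OF lbd_L cL]])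
    using cdiff_mult[OF lbd_const lbd_fps cN cW] cdiff_mult[OF lbd_fps lbd_fps cW cR]
    by (simp_all add: W_def g_def)
qed


lemma dk_add: "dk (a + b) = dk a + dk b" unfolding dk_def by (simp add: algebra_simps)
lemma dk_mult: "dk (a * b) = dk a * b + a * dk b" unfolding dk_def by (simp add: algebra_simps)
lemma dk_const: "dk (fls_const c) = 0" unfolding dk_def by simp
lemma dk_power: "dk (a ^ m) = of_nat m * a ^ (m - 1) * dk a" unfolding dk_def fls_deriv_power by (simp add: algebra_simps)
lemma dk_sum: "dk (\<Sum>i\<in>S. f i) = (\<Sum>i\<in>S. dk (f i))" unfolding dk_def fls_deriv_sum by (simp add: sum_distrib_left)
lemma dk_inv: "dk (inverse a) = - (inverse a)\<^sup>2 * dk (a :: real fls)" unfolding dk_def fls_inverse_deriv by (simp add: algebra_simps)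
lemma dk_comp: "(g :: real fps) $ 0 = 0 \<Longrightarrow> dk (fps_to_fls (c oo g)) = fps_to_fls (fps_deriv c oo g) * dk (fps_to_fls g)"
  unfolding dk_def fls_deriv_fps_to_fls fps_compose_deriv by (simp add: fls_times_fps_to_fls algebra_simps)
lemma dk_zero_iff: "dk a = 0 \<longleftrightarrow> fls_deriv a = 0" unfolding dk_def by simp

lemma dkW: "dk (fps_to_fls (gW u q)) = - (fps_to_fls (gW u q))\<^sup>2 * dk (Lser u q)"
  unfolding inv_Lser[symmetric] by (rule dk_inv)



lemma E_deriv:
  fixes C g :: "real fps" and L :: "real fls"
  assumes g0: "g $ 0 = 0" and C0: "C $ 0 = 0" and N: "0 < N" and LW: "L * fps_to_fls g = 1"
    and dW: "dk (fps_to_fls g) = - (fps_to_fls g)\<^sup>2 * dk L"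
  shows "dk (L ^ N * fps_to_fls (fps_exp 1 oo (C oo g))) =
     (L ^ N * fps_to_fls (fps_exp 1 oo (C oo g))) *
       ((fls_const (of_nat N) * fps_to_fls g - (fps_to_fls g)\<^sup>2 * fps_to_fls (fps_deriv C oo g)) * dk L)"
proof -
  define W where "W = fps_to_fls g"
  define F where "F = fps_to_fls (fps_exp 1 oo (C oo g))"
  have h0: "(C oo g) $ 0 = 0" using C0 by simp
  have LN: "L ^ (N - 1) = L ^ N * W"
  proof -
    have "L ^ N = L * L ^ (N - 1)" using N by (cases N) auto
    then have "L ^ N * W = L ^ (N - 1) * (L * W)" by (simp add: mult_ac)
    then show ?thesis using LW unfolding W_def by simp
  qed
  have dF: "dk F = F * (fps_to_fls (fps_deriv C oo g) * dk W)"
    unfolding F_def W_def dk_comp[OF h0] dk_comp[OF g0] by (simp add: mult_ac)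
  have "dk (L ^ N * F) = of_nat N * L ^ (N - 1) * dk L * F + L ^ N * dk F"
    by (simp only: dk_mult dk_power)
  also have "\<dots> = of_nat N * (L ^ N * W) * dk L * F + L ^ N * (F * (fps_to_fls (fps_deriv C oo g) * (- W\<^sup>2 * dk L)))"
    by (simp only: dF LN dW[folded W_def])
  also have "\<dots> = (L ^ N * F) * ((fls_const (of_nat N) * W - W\<^sup>2 * fps_to_fls (fps_deriv C oo g)) * dk L)"
    by (simp only: fls_of_nat) (simp add: algebra_simps)
  finally show ?thesis unfolding W_def F_def .
qed

lemma cvs_C:
  fixes g :: "real fps" and v :: "nat \<Rightarrow> pt \<Rightarrow> real" and q :: pt
  assumes g0: "g $ 0 = 0"
  defines "C \<equiv> Abs_fps (\<lambda>m. if m = 0 then 0 else - (1 / of_nat m) * pder VS (v m) q)"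
  shows "fps_to_fls (cvs v q oo g) = - fps_to_fls g * fps_to_fls (fps_deriv C oo g)"
proof -
  have e: "cvs v q = - (fps_X * fps_deriv C)"
  proof (rule fps_ext)
    fix n show "cvs v q $ n = (- (fps_X * fps_deriv C)) $ n"
      unfolding cvs_def C_def by (cases n) (auto simp: fps_deriv_nth fps_X_mult_nth)
  qed
  show ?thesis unfolding e fps_compose_uminus fps_compose_mult_distrib[OF g0] fps_X_fps_compose_startby0[OF g0]
    by (simp add: fls_times_fps_to_fls)
qed



lemma E_nth:
  fixes h :: "real fps"
  shows "(Lser u q ^ N * fps_to_fls (fps_exp 1 oo h)) $$ (- int N) = 1"
proof -
  have "Lser u q ^ N * fps_to_fls (fps_exp 1 oo h) = fls_X_inv ^ N * fps_to_fls (Lf u q ^ N * (fps_exp 1 oo h))"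
    unfolding Lser_form power_mult_distrib by (simp add: fps_to_fls_power fls_times_fps_to_fls mult_ac)
  also have "\<dots> = fls_shift (int N) (fps_to_fls (Lf u q ^ N * (fps_exp 1 oo h)))"
    by (rule fls_X_inv_power_times_conv_shift(1))
  finally show ?thesis by (simp add: Lf0 fps_nth_power_0)
qed

lemma P_nth: "Pser N pc q $$ (- int N) = 1"
  unfolding Pser_def by (simp add: fls_nth_sum)

theorem mainTheorem4:
  fixes N :: nat
    and u v pc :: "nat \<Rightarrow> pt \<Rightarrow> real"
  assumes N_pos: "0 < N"
    and diff_u: "\<And>n w p. 2 \<le> n \<Longrightarrow> admissible w \<Longrightarrow> p \<in> ptdom \<Longrightarrow> pdiffble w (u n) p"
    and diff_v: "\<And>n w p. 1 \<le> n \<Longrightarrow> admissible w \<Longrightarrow> p \<in> ptdom \<Longrightarrow> pdiffble w (v n) p"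
    and diff_p: "\<And>j w p. j < N \<Longrightarrow> admissible w \<Longrightarrow> p \<in> ptdom \<Longrightarrow> pdiffble w (pc j) p"
    and Lax_L: "\<And>n p. 1 \<le> n \<Longrightarrow> p \<in> ptdom \<Longrightarrow>
        fpder (VT n) (Lser u) p = pbr (Bser u n) (Lser u) p"
    and Lax_M: "\<And>n p. 1 \<le> n \<Longrightarrow> p \<in> ptdom \<Longrightarrow>
        fpder (VT n) (Mser N u v) p = pbr (Bser u n) (Mser N u v) p"
    and canon: "\<And>p. p \<in> ptdom \<Longrightarrow> pbr (Lser u) (Mser N u v) p = 1"
    and s_L: "\<And>p. p \<in> ptdom \<Longrightarrow>
        fpder VS (Lser u) p * Pser N pc p = pbr (Pser N pc) (Lser u) p"
    and s_M: "\<And>p. p \<in> ptdom \<Longrightarrow>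
        fpder VS (Mser N u v) p * Pser N pc p = pbr (Pser N pc) (Mser N u v) p"
    and s_B: "\<And>n p. 1 \<le> n \<Longrightarrow> p \<in> ptdom \<Longrightarrow>
        - (fpder VS (Bser u n) p * Pser N pc p)
          = - fpder (VT n) (Pser N pc) p - pbr (Pser N pc) (Bser u n) p"
  shows "\<forall>p\<in>ptdom. Pser N pc p =
      (Lser u p) ^ N * fps_to_fls (fps_exp 1 oo
         (Abs_fps (\<lambda>m. if m = 0 then 0 else - (1 / of_nat m) * pder VS (v m) p) oo Wser (Lser u p)))"
proof
  fix p assume pd: "p \<in> ptdom"
  obtain x t s where pe: "p = (x, t, s)" by (cases p) auto
  have fin: "finite {n. t n \<noteq> 0}" using pd unfolding pe ptdom_def by simp
  have du: "\<And>n. 2 \<le> n \<Longrightarrow> (\<lambda>y. u n (x, t, y)) differentiable (at s)"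
    using diff_u[of _ VS p] pd unfolding pe pdiffble_def admissible_def by simp
  have dv: "\<And>n. 1 \<le> n \<Longrightarrow> (\<lambda>y. v n (x, t, y)) differentiable (at s)"
    using diff_v[of _ VS p] pd unfolding pe pdiffble_def admissible_def by simp
  define L where "L = Lser u p"
  define Ls where "Ls = fpder VS (Lser u) p"
  define g where "g = gW u p"
  define W where "W = fps_to_fls g"
  define DK where "DK = dk L"
  define P where "P = Pser N pc p"
  define M where "M = Mser N u v p"
  define R where "R = fps_to_fls (cvf v p oo g)"
  define Q where "Q = fps_to_fls (fps_deriv (cvf v p) oo g)"
  define S where "S = fps_to_fls (cvs v p oo g)"
  define Sset where "Sset = {n. 1 \<le> n \<and> t n \<noteq> 0}"
  define aT where "aT = (\<Sum>n\<in>Sset. fls_const (of_nat n * t n) * (of_nat (n - 1) * L ^ (n - 1 - 1)))"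
  define C where "C = Abs_fps (\<lambda>m. if m = 0 then 0 else - (1 / of_nat m) * pder VS (v m) p)"
  define E where "E = L ^ N * fps_to_fls (fps_exp 1 oo (C oo g))"
  have Ms: "fpder VS (Mser N u v) p = aT * Ls + (fls_const (of_nat N) * W + fls_const (of_nat N * s) * (- W\<^sup>2 * Ls))
      + ((- W\<^sup>2 * Ls) * R + W * (S + Q * (- W\<^sup>2 * Ls)))"
  proof -
    have "fpder VS (Mser N u v) p = 
      ((\<Sum>n\<in>Sset. 0 * L ^ (n - 1) + fls_const (of_nat n * t n) * (of_nat (n - 1) * L ^ (n - 1 - 1) * Ls))
     + 0 + (fls_const (of_nat N) * W + fls_const (of_nat N * s) * (- W\<^sup>2 * Ls))
     + ((- W\<^sup>2 * Ls) * R + W * (S + Q * (- W\<^sup>2 * Ls))))"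
      unfolding pe L_def Ls_def W_def R_def S_def Q_def g_def Sset_def
      by (rule fpder_VS_cdiff[OF cdiff_M[OF du dv fin]])
    moreover have "(\<Sum>n\<in>Sset. 0 * L ^ (n - 1) + fls_const (of_nat n * t n) * (of_nat (n - 1) * L ^ (n - 1 - 1) * Ls)) = aT * Ls"
      unfolding aT_def sum_distrib_right by (simp add: mult.assoc)
    ultimately show ?thesis by simp
  qed
  have Mk: "dk M = aT * DK + fls_const (of_nat N * s) * (- W\<^sup>2 * DK) + ((- W\<^sup>2 * DK) * R + W * (Q * (- W\<^sup>2 * DK)))"
  proof -
    have "dk M = (\<Sum>n\<in>Sset. fls_const (of_nat n * t n) * (of_nat (n - 1) * L ^ (n - 1 - 1) * DK))
       + fls_const (of_nat N * s) * (- W\<^sup>2 * DK) + ((- W\<^sup>2 * DK) * R + W * (Q * (- W\<^sup>2 * DK)))"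
      unfolding M_def pe M_form
      by (simp add: dk_add dk_mult dk_const dk_sum dk_power dk_comp gW0 dkW
          L_def W_def R_def Q_def g_def Sset_def DK_def pe)
    moreover have "(\<Sum>n\<in>Sset. fls_const (of_nat n * t n) * (of_nat (n - 1) * L ^ (n - 1 - 1) * DK)) = aT * DK"
      unfolding aT_def sum_distrib_right by (simp add: mult.assoc)
    ultimately show ?thesis by simp
  qed
  have key1: "P * (fpder VS (Mser N u v) p * DK - dk M * Ls) = dk P"
  proof -
    have hL: "Ls * P = dk P * fpder VX (Lser u) p - fpder VX (Pser N pc) p * DK"
      using s_L[OF pd] unfolding pbr_def Ls_def P_def DK_def L_def .
    have hM: "fpder VS (Mser N u v) p * P = dk P * fpder VX (Mser N u v) p - fpder VX (Pser N pc) p * dk M"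
      using s_M[OF pd] unfolding pbr_def P_def M_def .
    have hc: "DK * fpder VX (Mser N u v) p - fpder VX (Lser u) p * dk M = 1"
      using canon[OF pd] unfolding pbr_def DK_def L_def M_def .
    have "P * (fpder VS (Mser N u v) p * DK - dk M * Ls) = DK * (fpder VS (Mser N u v) p * P) - dk M * (Ls * P)"
      by (simp add: algebra_simps)
    also have "\<dots> = dk P * (DK * fpder VX (Mser N u v) p - fpder VX (Lser u) p * dk M)"
      unfolding hL hM by (simp add: algebra_simps)
    also have "\<dots> = dk P" unfolding hc by simp
    finally show ?thesis .
  qed
  define H where "H = (fls_const (of_nat N) * W + W * S) * DK"
  have key2: "fpder VS (Mser N u v) p * DK - dk M * Ls = H"
    unfolding Ms Mk H_def by (simp add: algebra_simps)
  have dP: "dk P = P * H" using key1 key2 by simp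
  have SQ: "S = - W * fps_to_fls (fps_deriv C oo g)"
    unfolding S_def W_def C_def by (rule cvs_C[OF gW0[of u p, folded g_def]])
  have dE: "dk E = E * H"
  proof -
    have C0: "C $ 0 = 0" unfolding C_def by simp
    have LW: "L * fps_to_fls g = 1" unfolding L_def g_def by (rule LW1)
    have dW: "dk (fps_to_fls g) = - (fps_to_fls g)\<^sup>2 * dk L" unfolding L_def g_def by (rule dkW)
    have "dk E = E * ((fls_const (of_nat N) * W - W\<^sup>2 * fps_to_fls (fps_deriv C oo g)) * DK)"
      unfolding E_def W_def DK_def by (rule E_deriv[OF gW0[of u p, folded g_def] C0 N_pos LW dW])
    also have "\<dots> = E * H" unfolding H_def SQ by (simp add: algebra_simps power2_eq_square)
    finally show ?thesis .
  qed
  have EN: "E $$ (- int N) = 1" unfolding E_def L_def by (rule E_nth)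
  then have Enz: "E \<noteq> 0" by auto
  define c where "c = P / E"
  have Pc: "P = c * E" unfolding c_def using Enz by simp
  have "P * H = dk c * E + P * H"
  proof -
    have "P * H = dk (c * E)" using dP Pc by simp
    also have "\<dots> = dk c * E + c * (E * H)" unfolding dk_mult dE ..
    also have "\<dots> = dk c * E + P * H" unfolding Pc by (simp add: mult_ac)
    finally show ?thesis .
  qed
  then have "dk c * E = 0" by simp
  then have "dk c = 0" using Enz by simp
  then have cc: "c = fls_const (c $$ 0)" using dk_zero_iff fls_deriv_eq_0_iff by blast
  have "P $$ (- int N) = c $$ 0 * E $$ (- int N)" using Pc cc by (metis fls_mult_const_nth(1))
  then have "c $$ 0 = 1" using EN P_nth[of N pc p] unfolding P_def by simp
  then have "P = E" using Pc cc by simp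
  then show "Pser N pc p = (Lser u p) ^ N * fps_to_fls (fps_exp 1 oo
         (Abs_fps (\<lambda>m. if m = 0 then 0 else - (1 / of_nat m) * pder VS (v m) p) oo Wser (Lser u p)))"
    unfolding P_def E_def L_def C_def g_def Wser_Lser .
qed


end
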